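(* Let $(g,f)$ be a Riordan matrix with $f(t)=\sum_{j\ge1}f_jt^j$, let $Z(t)=\sum_{j\ge0}z_jt^j$ be the generating function of its $Z$-sequence, and let $\bar f(t)=\sum_{j\ge1}\bar f_jt^j$ be the compositional inverse of $f$ (with $\bar f_0=0$). Then a sequence $(\hat b_j)_{j\ge0}$ is a type-II $B$-sequence of $(g,f)$ if and only if $\hat b_0=z_0$, $z_1=0$, for every $\ell\ge1$ $$\hat b_\ell=f_1^{\ell}\Big(z_{2\ell}-\sum_{\mathbf i=(i_1,\dots,i_k)\in\mathcal D_{2\ell,\ell-1}}\hat b_k\,\bar f_{i_1-1}\bar f_{i_2-1}\cdots\bar f_{i_k-1}\Big),$$ and for every $\ell\ge1$ $$z_{2\ell+1}=\sum_{\mathbf i=(i_1,\dots,i_k)\in\mathcal D_{2\ell+1,\ell}}\hat b_k\,\bar f_{i_1-1}\bar f_{i_2-1}\cdots\bar f_{i_k-1}.$$ (Thus $\hat b_1=f_1z_2$, $z_3=\hat b_1\bar f_2$, $\hat b_2=f_1^2(z_4-\hat b_1\bar f_3)$, $z_5=\hat b_1\bar f_4+2\hat b_2\bar f_1\bar f_2$, etc., with $z_{2\ell}$ arbitrary.)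
   Context: Let $K$ be $\mathbb{R}$ or $\mathbb{C}$. A (proper) Riordan matrix is a pair $(g,f)$ of formal power series in $K[[t]]$ with $g(0)=1$, $f(0)=0$, $f'(0)\neq 0$, identified with the infinite lower triangular matrix $(d_{n,k})_{n,k\ge0}$, $d_{n,k}=[t^n]g(t)f(t)^k$; we set $d_{n,k}=0$ if $n<0$, $k<0$ or $k>n$. The $Z$-sequence of $(g,f)$ is the unique sequence whose generating function $Z(t)$ satisfies $g(t)=1/(1-tZ(f(t)))$. A type-II $B$-sequence is a sequence $(\hat b_j)_{j\ge0}$ such that $d_{n+1,0}=\sum_{j\ge0}\hat b_j d_{n-j,j}$ for all $n\ge0$. For positive integers $n,m$, $\mathcal D_{n,m}$ is the set of compositions of $n$ into at most $m$ parts, i.e. tuples $(i_1,\dots,i_k)$ of positive integers with $1\le k\le m$ and $i_1+\cdots+i_k=n$; $k$ is the length. By convention $\mathcal D_{2,0}=\emptyset$ (empty sums are $0$). *)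

theory Defs
  imports "HOL-Computational_Algebra.Formal_Power_Series"
begin

definition riordan :: "'a::field fps \<Rightarrow> 'a fps \<Rightarrow> bool" where
  "riordan g f \<longleftrightarrow> fps_nth g 0 = 1 \<and> fps_nth f 0 = 0 \<and> fps_nth f 1 \<noteq> 0"

definition riordan_entry :: "'a::field fps \<Rightarrow> 'a fps \<Rightarrow> nat \<Rightarrow> nat \<Rightarrow> 'a" where
  "riordan_entry g f n k = (if k \<le> n then fps_nth (g * f ^ k) n else 0)"

definition is_Z_gf :: "'a::field fps \<Rightarrow> 'a fps \<Rightarrow> 'a fps \<Rightarrow> bool" where
  "is_Z_gf g f Z \<longleftrightarrow> g = inverse (1 - fps_X * (Z oo f))"

(* type-II B-sequence: d_{n+1,0} = sum_j b_j d_{n-j,j}; terms with j > n vanish (n-j < 0) *)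
definition is_typeII_B_seq :: "'a::field fps \<Rightarrow> 'a fps \<Rightarrow> (nat \<Rightarrow> 'a) \<Rightarrow> bool" where
  "is_typeII_B_seq g f b \<longleftrightarrow>
     (\<forall>n. riordan_entry g f (Suc n) 0 = (\<Sum>j\<le>n. b j * riordan_entry g f (n - j) j))"

definition compositions_le :: "nat \<Rightarrow> nat \<Rightarrow> nat list set" where
  "compositions_le n m = {is. 1 \<le> length is \<and> length is \<le> m \<and> (\<forall>i\<in>set is. 0 < i) \<and> sum_list is = n}"

end

theory Submission
  imports Defs
begin

unbundle fps_syntax

definition comps :: "nat \<Rightarrow> nat \<Rightarrow> nat list set" where
  "comps k n = {is. length is = k \<and> (\<forall>i\<in>set is. 0 < i) \<and> sum_list is = n}"

lemma finite_comps: "finite (comps k n)"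
proof (rule finite_subset)
  show "comps k n \<subseteq> {xs. set xs \<subseteq> {0..n} \<and> length xs = k}"
    by (auto simp: comps_def member_le_sum_list)
  show "finite {xs. set xs \<subseteq> {0..n} \<and> length xs = k}"
    by (rule finite_lists_length_eq) simp
qed

lemma comps_0: "comps 0 n = (if n = 0 then {[]} else {})"
  by (auto simp: comps_def)

lemma comps_Suc_bij:
  "bij_betw (\<lambda>(i, is). i # is) (SIGMA i:{1..n}. comps k (n - i)) (comps (Suc k) n)"
proof (rule bij_betwI')
  fix x y assume "x \<in> (SIGMA i:{1..n}. comps k (n - i))" "y \<in> (SIGMA i:{1..n}. comps k (n - i))"
  then show "((case x of (i, is) \<Rightarrow> i # is) = (case y of (i, is) \<Rightarrow> i # is)) = (x = y)"
    by (cases x; cases y) auto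
next
  fix x assume "x \<in> (SIGMA i:{1..n}. comps k (n - i))"
  then show "(case x of (i, is) \<Rightarrow> i # is) \<in> comps (Suc k) n"
    by (cases x) (auto simp: comps_def)
next
  fix y assume y: "y \<in> comps (Suc k) n"
  then obtain i ys where yi: "y = i # ys" by (cases y) (auto simp: comps_def)
  have "(i, ys) \<in> (SIGMA i:{1..n}. comps k (n - i))"
    using y yi by (auto simp: comps_def)
  then show "\<exists>x\<in>(SIGMA i:{1..n}. comps k (n - i)). y = (case x of (i, is) \<Rightarrow> i # is)"
    using yi by force
qed

lemma power_nth_comps:
  fixes h :: "'a::comm_ring_1 fps"
  assumes h0: "h $ 0 = 0"
  shows "(h ^ k) $ n = (\<Sum>is\<in>comps k n. \<Prod>i\<leftarrow>is. h $ i)"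
proof (induction k arbitrary: n)
  case 0
  then show ?case by (simp add: comps_0)
next
  case (Suc k)
  have "(h ^ Suc k) $ n = (\<Sum>i=0..n. h $ i * (h ^ k) $ (n - i))"
    by (simp add: fps_mult_nth)
  also have "\<dots> = (\<Sum>i=1..n. h $ i * (h ^ k) $ (n - i))"
    using h0 by (simp add: sum.atLeast_Suc_atMost)
  also have "\<dots> = (\<Sum>i=1..n. \<Sum>is\<in>comps k (n - i). \<Prod>j\<leftarrow>i # is. h $ j)"
    by (simp add: Suc sum_distrib_left)
  also have "\<dots> = (\<Sum>x\<in>(SIGMA i:{1..n}. comps k (n - i)). \<Prod>j\<leftarrow>(case x of (i, is) \<Rightarrow> i # is). h $ j)"
    by (subst sum.Sigma) (auto simp: finite_comps split_def)
  also have "\<dots> = (\<Sum>is\<in>comps (Suc k) n. \<Prod>i\<leftarrow>is. h $ i)"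
    by (rule sum.reindex_bij_betw[OF comps_Suc_bij])
  finally show ?case .
qed

lemma coeff_identity:
  fixes g f :: "'a::field fps" and b :: "nat \<Rightarrow> 'a"
  assumes f0: "f $ 0 = 0"
  shows "(g * (Abs_fps b oo (fps_X * f))) $ n = (\<Sum>j\<le>n. b j * riordan_entry g f (n - j) j)"
proof -
  have fj: "(f ^ j) $ i = 0" if "i < j" for i j
    using f0 that by (metis startsby_zero_power_prefix)
  have xf: "((fps_X * f) ^ j) $ m = (if m < j then 0 else (f ^ j) $ (m - j))" for j m
    by (simp add: power_mult_distrib fps_X_power_mult_nth)
  have "(g * (Abs_fps b oo (fps_X * f))) $ n
      = (\<Sum>i=0..n. g $ i * (\<Sum>j=0..n - i. b j * (f ^ j) $ (n - i - j)))"
    by (simp add: fps_mult_nth fps_compose_nth xf)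
  also have "\<dots> = (\<Sum>i=0..n. \<Sum>j=0..n. if i + j \<le> n then g $ i * b j * (f ^ j) $ (n - i - j) else 0)"
  proof (rule sum.cong[OF refl])
    fix i assume "i \<in> {0..n}"
    have "(\<Sum>j=0..n. if i + j \<le> n then g $ i * b j * (f ^ j) $ (n - i - j) else 0)
        = (\<Sum>j\<in>{j\<in>{0..n}. i + j \<le> n}. g $ i * b j * (f ^ j) $ (n - i - j))"
      by (rule sum.inter_filter[symmetric]) simp
    also have "{j\<in>{0..n}. i + j \<le> n} = {0..n - i}" using \<open>i \<in> {0..n}\<close> by auto
    finally show "g $ i * (\<Sum>j=0..n - i. b j * (f ^ j) $ (n - i - j)) = (\<Sum>j=0..n. if i + j \<le> n then g $ i * b j * (f ^ j) $ (n - i - j) else 0)"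
      by (simp add: sum_distrib_left mult.assoc)
  qed
  also have "\<dots> = (\<Sum>j=0..n. \<Sum>i=0..n. if i + j \<le> n then g $ i * b j * (f ^ j) $ (n - i - j) else 0)"
    by (rule sum.swap)
  also have "\<dots> = (\<Sum>j\<le>n. b j * riordan_entry g f (n - j) j)"
  proof -
    have "(\<Sum>i=0..n. if i + j \<le> n then g $ i * b j * (f ^ j) $ (n - i - j) else 0)
        = b j * riordan_entry g f (n - j) j" if "j \<le> n" for j
    proof -
      have "(\<Sum>i=0..n. if i + j \<le> n then g $ i * b j * (f ^ j) $ (n - i - j) else 0)
          = (\<Sum>i\<in>{i\<in>{0..n}. i + j \<le> n}. g $ i * b j * (f ^ j) $ (n - i - j))"
        by (rule sum.inter_filter[symmetric]) simp
      also have "{i\<in>{0..n}. i + j \<le> n} = {0..n - j}" using that by auto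
      also have "(\<Sum>i\<in>{0..n - j}. g $ i * b j * (f ^ j) $ (n - i - j)) = b j * (g * f ^ j) $ (n - j)"
        by (simp add: fps_mult_nth sum_distrib_left mult_ac diff_diff_eq add.commute)
      also have "(g * f ^ j) $ (n - j) = riordan_entry g f (n - j) j"
      proof (cases "j \<le> n - j")
        case True then show ?thesis by (simp add: riordan_entry_def)
      next
        case False
        have "(g * f ^ j) $ (n - j) = (\<Sum>i=0..n - j. g $ i * (f ^ j) $ (n - j - i))"
          by (simp add: fps_mult_nth)
        also have "\<dots> = 0" using False by (intro sum.neutral) (auto intro!: fj)
        finally show ?thesis using False by (simp add: riordan_entry_def)
      qed
      finally show ?thesis .
    qed
    then show ?thesis by (simp add: atLeast0AtMost)
  qed
  finally show ?thesis .
qed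

lemma typeII_iff_compose:
  fixes g f Z :: "'a::field fps" and b :: "nat \<Rightarrow> 'a"
  assumes r: "riordan g f" and zg: "is_Z_gf g f Z"
  shows "is_typeII_B_seq g f b \<longleftrightarrow> Z = Abs_fps b oo (fps_X * fps_inv f)"
proof -
  have f0: "f $ 0 = 0" and f1: "f $ 1 \<noteq> 0" and g0: "g $ 0 = 1" using r by (auto simp: riordan_def)
  define C where "C = Abs_fps b oo (fps_X * f)"
  define W where "W = Z oo f"
  have gW: "g * (1 - fps_X * W) = 1"
    using zg by (simp add: is_Z_gf_def W_def inverse_mult_eq_1)
  have "is_typeII_B_seq g f b \<longleftrightarrow> (\<forall>n. g $ Suc n = (g * C) $ n)"
    by (simp add: is_typeII_B_seq_def coeff_identity[OF f0] C_def riordan_entry_def)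
  also have "\<dots> \<longleftrightarrow> g = 1 + fps_X * (g * C)"
  proof
    assume "\<forall>n. g $ Suc n = (g * C) $ n"
    then show "g = 1 + fps_X * (g * C)"
      using g0 by (intro fps_ext) (case_tac n, auto)
  next
    assume "g = 1 + fps_X * (g * C)"
    then have "g $ Suc n = (1 + fps_X * (g * C)) $ Suc n" for n by simp
    then show "\<forall>n. g $ Suc n = (g * C) $ n" by simp
  qed
  also have "\<dots> \<longleftrightarrow> fps_X * g * C = fps_X * g * W"
  proof -
    have "g = 1 + fps_X * g * W" using gW by (simp add: algebra_simps)
    then show ?thesis by (metis add_left_cancel mult.assoc)
  qed
  also have "\<dots> \<longleftrightarrow> C = W"
  proof -
    have "fps_X * g \<noteq> 0" using g0 by (metis fps_nonzero_nth mult_eq_0_iff one_neq_zero fps_X_neq_zero)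
    then show ?thesis by simp
  qed
  also have "\<dots> \<longleftrightarrow> Z = Abs_fps b oo (fps_X * fps_inv f)"
  proof -
    have fi0: "fps_inv f $ 0 = 0" by (simp add: fps_inv_def)
    have "(fps_X * fps_inv f) oo f = fps_X * f"
      by (simp only: fps_compose_mult_distrib[OF f0] fps_inv[OF f0 f1] fps_X_fps_compose_startby0[OF f0] mult.commute)
    have h0: "(fps_X * fps_inv f) $ 0 = 0" by simp
    have "C = (Abs_fps b oo (fps_X * fps_inv f)) oo f"
      unfolding C_def by (simp only: fps_compose_assoc[OF f0 h0, symmetric] \<open>(fps_X * fps_inv f) oo f = fps_X * f\<close>)
    then have "C = W \<longleftrightarrow> (Abs_fps b oo (fps_X * fps_inv f)) oo f = Z oo f" by (simp add: W_def)
    also have "\<dots> \<longleftrightarrow> Abs_fps b oo (fps_X * fps_inv f) = Z" by (rule fps_compose_inj_right[OF f0 f1])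
    finally show ?thesis by auto
  qed
  finally show ?thesis .
qed

lemma compositions_le_sum:
  fixes h :: "'a::comm_ring_1 fps" and c :: "nat \<Rightarrow> 'a" and b :: "nat \<Rightarrow> 'a"
  assumes h0: "h $ 0 = 0" and hc: "\<And>i. 0 < i \<Longrightarrow> h $ i = c (i - 1)"
  shows "(\<Sum>is\<in>compositions_le n m. b (length is) * (\<Prod>i\<leftarrow>is. c (i - 1)))
       = (\<Sum>k=1..m. b k * (h ^ k) $ n)"
proof -
  have U: "compositions_le n m = (\<Union>k\<in>{1..m}. comps k n)"
    by (auto simp: compositions_le_def comps_def)
  have "(\<Sum>is\<in>compositions_le n m. b (length is) * (\<Prod>i\<leftarrow>is. c (i - 1)))
      = (\<Sum>k\<in>{1..m}. \<Sum>is\<in>comps k n. b (length is) * (\<Prod>i\<leftarrow>is. c (i - 1)))"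
    unfolding U by (rule sum.UNION_disjoint) (auto simp: finite_comps, auto simp: comps_def)
  also have "\<dots> = (\<Sum>k\<in>{1..m}. b k * (h ^ k) $ n)"
  proof (rule sum.cong[OF refl])
    fix k
    have "(\<Sum>is\<in>comps k n. b (length is) * (\<Prod>i\<leftarrow>is. c (i - 1)))
        = (\<Sum>is\<in>comps k n. b k * (\<Prod>i\<leftarrow>is. h $ i))"
    proof (rule sum.cong[OF refl])
      fix xs assume xs: "xs \<in> comps k n"
      then have "map (\<lambda>i. c (i - 1)) xs = map (\<lambda>i. h $ i) xs"
        by (auto simp: comps_def hc)
      moreover have "length xs = k" using xs by (simp add: comps_def)
      ultimately show "b (length xs) * (\<Prod>i\<leftarrow>xs. c (i - 1)) = b k * (\<Prod>i\<leftarrow>xs. h $ i)"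
        by metis
    qed
    also have "\<dots> = b k * (h ^ k) $ n"
      by (simp add: power_nth_comps[OF h0] sum_distrib_left)
    finally show "(\<Sum>is\<in>comps k n. b (length is) * (\<Prod>i\<leftarrow>is. c (i - 1))) = b k * (h ^ k) $ n" .
  qed
  finally show ?thesis .
qed

lemma h_power_nth:
  fixes f :: "'a::field fps"
  assumes f0: "f $ 0 = 0" and f1: "f $ 1 \<noteq> 0"
  shows "((fps_X * fps_inv f) ^ k) $ n =
           (if n < 2 * k then 0 else (fps_shift 1 (fps_inv f) ^ k) $ (n - 2 * k))"
    and "(fps_shift 1 (fps_inv f) ^ k) $ 0 = inverse (f $ 1) ^ k"
proof -
  define q where "q = fps_shift 1 (fps_inv f)"
  have fi0: "fps_inv f $ 0 = 0" by (simp add: fps_inv_def)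
  have "fps_inv f = fps_X * q"
    by (rule fps_ext) (auto simp: q_def fi0 fps_X_mult_nth)
  then have "(fps_X * fps_inv f) ^ k = fps_X ^ (2 * k) * q ^ k"
    by (simp add: power_mult_distrib power_mult mult.assoc[symmetric] power2_eq_square)
  then show "((fps_X * fps_inv f) ^ k) $ n =
           (if n < 2 * k then 0 else (fps_shift 1 (fps_inv f) ^ k) $ (n - 2 * k))"
    by (simp add: fps_X_power_mult_nth q_def)
  have "fps_inv f $ 1 = inverse (f $ 1)"
    by (simp add: fps_inv_def field_simps f1)
  then show "(fps_shift 1 (fps_inv f) ^ k) $ 0 = inverse (f $ 1) ^ k"
    by (simp add: fps_power_zeroth)
qed


lemma solve_aux:
  fixes c z s x :: "'a::field"
  assumes "c \<noteq> 0"
  shows "(z = s + x * inverse c) \<longleftrightarrow> (x = c * (z - s))"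
  using assms by (auto simp: field_simps)

theorem theorem3p4:
  fixes g f Z :: "'a::real_normed_field fps" and b :: "nat \<Rightarrow> 'a"
  assumes "riordan g f"
    and "is_Z_gf g f Z"
  shows "is_typeII_B_seq g f b \<longleftrightarrow>
     b 0 = fps_nth Z 0 \<and> fps_nth Z 1 = 0 \<and>
     (\<forall>l\<ge>1. b l = (fps_nth f 1) ^ l *
        (fps_nth Z (2 * l) - (\<Sum>is\<in>compositions_le (2 * l) (l - 1).
            b (length is) * (\<Prod>i\<leftarrow>is. fps_nth (fps_inv f) (i - 1))))) \<and>
     (\<forall>l\<ge>1. fps_nth Z (2 * l + 1) = (\<Sum>is\<in>compositions_le (2 * l + 1) l.
            b (length is) * (\<Prod>i\<leftarrow>is. fps_nth (fps_inv f) (i - 1))))"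
proof -
  have f0: "f $ 0 = 0" and f1: "f $ 1 \<noteq> 0" using assms(1) by (auto simp: riordan_def)
  define h where "h = fps_X * fps_inv f"
  define E where "E n = (\<Sum>k=0..n. b k * (h ^ k) $ n)" for n
  define S where "S m n = (\<Sum>is\<in>compositions_le n m. b (length is) * (\<Prod>i\<leftarrow>is. fps_inv f $ (i - 1)))" for m n
  have h0: "h $ 0 = 0" by (simp add: h_def)
  have hc: "h $ i = fps_inv f $ (i - 1)" if "0 < i" for i
    using that by (cases i) (auto simp: h_def)
  have HS: "S m n = (\<Sum>k=1..m. b k * (h ^ k) $ n)" for m n
    unfolding S_def by (rule compositions_le_sum[OF h0 hc])
  have Hz: "(h ^ k) $ n = 0" if "n < 2 * k" for k n
    using h_power_nth(1)[OF f0 f1, of k n] that by (simp add: h_def)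
  have Hl: "(h ^ l) $ (2 * l) = inverse (f $ 1) ^ l" for l
    using h_power_nth(1)[OF f0 f1, of l "2 * l"] h_power_nth(2)[OF f0 f1, of l] by (simp add: h_def)
  have E_half: "E n = (\<Sum>k=1..n div 2. b k * (h ^ k) $ n)" if "n \<ge> 1" for n
    unfolding E_def
  proof (rule sum.mono_neutral_right)
    show "finite {0..n}" by simp
    show "{1..n div 2} \<subseteq> {0..n}" by auto
    show "\<forall>k\<in>{0..n} - {1..n div 2}. b k * (h ^ k) $ n = 0"
    proof
      fix k assume k: "k \<in> {0..n} - {1..n div 2}"
      show "b k * (h ^ k) $ n = 0"
      proof (cases "k = 0")
        case True then show ?thesis using that by simp
      next
        case False then have "n < 2 * k" using k by auto
        then show ?thesis by (simp add: Hz)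
      qed
    qed
  qed
  have E0: "E 0 = b 0" by (simp add: E_def)
  have E1: "E 1 = 0" using E_half[of 1] by simp
  have Eodd: "E (2 * l + 1) = S l (2 * l + 1)" for l
    using E_half[of "2 * l + 1"] HS by simp
  have Eeven: "E (2 * l) = S (l - 1) (2 * l) + b l * inverse (f $ 1) ^ l" if "l \<ge> 1" for l
  proof -
    have "E (2 * l) = (\<Sum>k=1..l. b k * (h ^ k) $ (2 * l))" using E_half[of "2 * l"] that by simp
    also have "\<dots> = (\<Sum>k=1..Suc (l - 1). b k * (h ^ k) $ (2 * l))" using that by simp
    also have "\<dots> = S (l - 1) (2 * l) + b l * (h ^ l) $ (2 * l)"
      using that by (subst sum.cl_ivl_Suc) (auto simp: HS)
    finally show ?thesis by (simp add: Hl)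
  qed
  have even_iff: "Z $ (2 * l) = E (2 * l) \<longleftrightarrow> b l = (f $ 1) ^ l * (Z $ (2 * l) - S (l - 1) (2 * l))"
    if "l \<ge> 1" for l
  proof -
    have c: "(f $ 1) ^ l \<noteq> 0" using f1 by simp
    show ?thesis unfolding Eeven[OF that] power_inverse
      by (rule solve_aux[OF c])
  qed
  have "is_typeII_B_seq g f b \<longleftrightarrow> Z = Abs_fps b oo h"
    unfolding h_def by (rule typeII_iff_compose[OF assms])
  also have "\<dots> \<longleftrightarrow> (\<forall>n. Z $ n = E n)"
    by (simp add: fps_eq_iff fps_compose_nth E_def)
  also have "\<dots> \<longleftrightarrow> b 0 = Z $ 0 \<and> Z $ 1 = 0 \<and>
     (\<forall>l\<ge>1. b l = (f $ 1) ^ l * (Z $ (2 * l) - S (l - 1) (2 * l))) \<and>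
     (\<forall>l\<ge>1. Z $ (2 * l + 1) = S l (2 * l + 1))"
  proof
    assume A: "\<forall>n. Z $ n = E n"
    show "b 0 = Z $ 0 \<and> Z $ 1 = 0 \<and>
     (\<forall>l\<ge>1. b l = (f $ 1) ^ l * (Z $ (2 * l) - S (l - 1) (2 * l))) \<and>
     (\<forall>l\<ge>1. Z $ (2 * l + 1) = S l (2 * l + 1))"
    proof (intro conjI allI impI)
      show "b 0 = Z $ 0" using A E0 by simp
      show "Z $ 1 = 0" using A E1 by simp
      fix l :: nat assume l: "l \<ge> 1"
      show "b l = (f $ 1) ^ l * (Z $ (2 * l) - S (l - 1) (2 * l))"
        using even_iff[OF l] A by blast
    next
      fix l :: nat assume l: "l \<ge> 1"
      show "Z $ (2 * l + 1) = S l (2 * l + 1)" using A Eodd by simp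
    qed
  next
    assume B: "b 0 = Z $ 0 \<and> Z $ 1 = 0 \<and>
     (\<forall>l\<ge>1. b l = (f $ 1) ^ l * (Z $ (2 * l) - S (l - 1) (2 * l))) \<and>
     (\<forall>l\<ge>1. Z $ (2 * l + 1) = S l (2 * l + 1))"
    show "\<forall>n. Z $ n = E n"
    proof
      fix n :: nat
      define l where "l = n div 2"
      have l: "n = 2 * l \<or> n = 2 * l + 1" unfolding l_def by presburger
      show "Z $ n = E n"
      proof (cases "l = 0")
        case True
        then have "n = 0 \<or> n = 1" using l by simp
        then show ?thesis using B E0 E1 by auto
      next
        case False
        then have l1: "l \<ge> 1" by simp
        show ?thesis
        proof (cases "n = 2 * l")
          case True
          have "b l = (f $ 1) ^ l * (Z $ (2 * l) - S (l - 1) (2 * l))" using B l1 by blast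
          then show ?thesis using even_iff[OF l1] True by blast
        next
          case False
          then have "n = 2 * l + 1" using l by simp
          then show ?thesis using B l1 Eodd by simp
        qed
      qed
    qed
  qed
  finally show ?thesis by (simp add: S_def)
qed

end
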